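(* For every $\psi_u\in(0,2\pi)$, $$\alpha_{\mathrm I}=\frac{\zeta_u\cos^2\!\big(-2\pi t-\frac{\pi}{\mu}+\frac{2\pi}{\mu}\lceil t\mu\rceil\big)}{V^2},$$ where $t=\frac34-\frac{\psi_u}{2\pi}\in(-\tfrac14,\tfrac34)$ and $V=\sin(\pi/\mu)/W$. In particular, if $\psi_u$ is uniform on $(0,2\pi)$ then $t$ is uniform on $(-\tfrac14,\tfrac34)$.
   Context: Setup: Let $W\ge 1$ be an integer and $\mu\ge 2$ an even integer, and set $K=\mu W+1$. Let $\zeta_u>0$ and $\psi_u\in(0,2\pi)$, and for $k=1,\dots,K$ let $h_{u,k}=\zeta_u^{1/2}e^{j(\psi_u+2\pi(k-1)/\mu)}$, where $j=\sqrt{-1}$. Let $\mathcal K_1=\{k\in\{2,\dots,K\}:\operatorname{Re}(h_{u,k})>0\}$ and $\alpha_{\mathrm I}=\big(\sum_{k\in\mathcal K_1}\operatorname{Re}(h_{u,k})\big)^2$. *)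

theory Defs
  imports "HOL-Analysis.Analysis"
begin

definition hcoef :: "real \<Rightarrow> real \<Rightarrow> nat \<Rightarrow> nat \<Rightarrow> complex" where
  "hcoef \<zeta> \<psi> \<mu> k =
     complex_of_real (sqrt \<zeta>) * exp (\<i> * complex_of_real (\<psi> + 2 * pi * (real k - 1) / real \<mu>))"

definition K1 :: "real \<Rightarrow> real \<Rightarrow> nat \<Rightarrow> nat \<Rightarrow> nat set" where
  "K1 \<zeta> \<psi> \<mu> W = {k \<in> {2..\<mu> * W + 1}. Re (hcoef \<zeta> \<psi> \<mu> k) > 0}"

definition alphaI :: "real \<Rightarrow> real \<Rightarrow> nat \<Rightarrow> nat \<Rightarrow> real" where
  "alphaI \<zeta> \<psi> \<mu> W = (\<Sum>k\<in>K1 \<zeta> \<psi> \<mu> W. Re (hcoef \<zeta> \<psi> \<mu> k)) ^ 2"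

end

theory Submission
  imports Defs
begin

lemma sum_split_add: "(\<Sum>i<N+n. g i) = (\<Sum>i<N. g i) + (\<Sum>i<n. g (N + i)) " for g :: "nat \<Rightarrow> real"
  by (induction n) auto

lemma periodic_shift1:
  fixes f :: "int \<Rightarrow> real" and n :: nat
  assumes per: "\<And>m. f (m + int n) = f m"
  shows "(\<Sum>i<n. f (c + 1 + int i)) = (\<Sum>i<n. f (c + int i))"
proof -
  have "(\<Sum>i<Suc n. f (c + int i)) = f (c + int 0) + (\<Sum>i<n. f (c + int (Suc i)))"
    by (rule sum.lessThan_Suc_shift)
  moreover have "(\<Sum>i<Suc n. f (c + int i)) = (\<Sum>i<n. f (c + int i)) + f (c + int n)"
    by simp
  moreover have "f (c + int n) = f c" using per by simp
  ultimately show ?thesis by (simp add: ac_simps)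
qed

lemma periodic_shift:
  fixes f :: "int \<Rightarrow> real" and n :: nat
  assumes per: "\<And>m. f (m + int n) = f m"
  shows "(\<Sum>i<n. f (c + int i)) = (\<Sum>i<n. f (int i))"
proof (induction c rule: int_induct[where k=0])
  case base then show ?case by simp
next
  case (step1 i) then show ?case using periodic_shift1[of f n, OF per, of i] by simp
next
  case (step2 i) then show ?case using periodic_shift1[of f n, OF per, of "i - 1"] by simp
qed

lemma periodic_W:
  fixes f :: "int \<Rightarrow> real" and n W :: nat
  assumes per: "\<And>m. f (m + int n) = f m"
  shows "(\<Sum>i<n*W. f (1 + int i)) = real W * (\<Sum>i<n. f (int i))"
proof (induction W)
  case 0 then show ?case by simp
next
  case (Suc W)
  have "(\<Sum>i<n*Suc W. f (1 + int i)) = (\<Sum>i<n*W. f (1 + int i)) + (\<Sum>i<n. f (1 + int (n*W + i)))"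
    using sum_split_add[of "\<lambda>i. f (1 + int i)" "n*W" n] by (simp add: ac_simps)
  also have "(\<Sum>i<n. f (1 + int (n*W + i))) = (\<Sum>i<n. f ((1 + int (n*W)) + int i))"
    by (simp add: ac_simps)
  also have "\<dots> = (\<Sum>i<n. f (int i))" by (rule periodic_shift[of f n, OF per])
  finally show ?case using Suc by (simp add: algebra_simps)
qed

lemma cos_telescope:
  fixes a h :: real
  shows "2 * sin h * (\<Sum>i<k. cos (a + 2 * h * real i)) = sin (a + (2 * real k - 1) * h) - sin (a - h)"
proof (induction k)
  case 0 then show ?case by (simp add: algebra_simps)
next
  case (Suc k)
  have e: "2 * sin h * cos (a + 2 * h * real k) = sin (a + (2 * real k + 1) * h) - sin (a + (2 * real k - 1) * h)"
  proof -
    have "sin (a + (2 * real k + 1) * h) = sin ((a + 2 * h * real k) + h)" by (simp add: algebra_simps)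
    moreover have "sin (a + (2 * real k - 1) * h) = sin ((a + 2 * h * real k) - h)" by (simp add: algebra_simps)
    ultimately show ?thesis by (simp add: sin_add sin_diff)
  qed
  show ?case using Suc e by (simp add: algebra_simps)
qed

lemma alg_A: assumes "z > 0" shows "(sqrt z * (real W * (- s / sh)))\<^sup>2 = z * (real W * s / sh)\<^sup>2"
  using assms by (simp add: power_mult_distrib power_divide)
lemma alg_B: assumes "sh > 0" "real W > 0" shows "z * (real W * s / sh)\<^sup>2 = z * (- s)\<^sup>2 / (sh / real W)\<^sup>2"
  using assms by (simp add: power_mult_distrib power_divide)

lemma re_hcoef: "Re (hcoef \<zeta> \<psi> \<mu> k) = sqrt \<zeta> * cos (\<psi> + 2 * pi * (real k - 1) / real \<mu>)"
  unfolding hcoef_def by (simp add: Re_exp Im_exp)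

theorem theorem1:
  fixes W \<mu> :: nat and \<zeta> \<psi> :: real
  assumes "W \<ge> 1" and "\<mu> \<ge> 2" and "even \<mu>"
    and "\<zeta> > 0" and "\<psi> \<in> {0<..<2 * pi}"
  shows "let t = 3 / 4 - \<psi> / (2 * pi); V = sin (pi / real \<mu>) / real W in
           t \<in> {-1/4<..<3/4} \<and>
           alphaI \<zeta> \<psi> \<mu> W =
             \<zeta> * (cos (- 2 * pi * t - pi / real \<mu> + 2 * pi / real \<mu> * real_of_int \<lceil>t * real \<mu>\<rceil>))\<^sup>2
               / V\<^sup>2"
proof -
  define t where "t = 3 / 4 - \<psi> / (2 * pi)"
  define h where "h = pi / real \<mu>"
  define n where "n = \<mu> div 2"
  define c where "c = \<lceil>t * real \<mu>\<rceil>"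
  define a where "a = \<psi> + 2 * h * real_of_int c"
  define F where "F = (\<lambda>m::int. max 0 (cos (\<psi> + 2 * h * real_of_int m)))"
  have mu: "\<mu> = n + n" using assms(3) unfolding n_def by auto
  have npos: "n \<ge> 1" using assms(2) mu by auto
  have hpos: "h > 0" unfolding h_def using assms(2) by simp
  have hmu: "h * real \<mu> = pi" unfolding h_def using assms(2) by simp
  have hn: "2 * h * real n = pi" using hmu mu by (simp add: algebra_simps)
  have hle: "h \<le> pi / 2"
  proof -
    have "2 * h * 1 \<le> 2 * h * real n" using npos hpos by (intro mult_left_mono) auto
    then show ?thesis using hn by simp
  qed
  have sinh: "sin h > 0" using hpos hle by (intro sin_gt_zero) auto
  have trange: "t \<in> {-1/4<..<3/4}"
    using assms(5) pi_gt_zero unfolding t_def by (auto simp: field_simps)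
  have cge: "real_of_int c \<ge> t * real \<mu>" unfolding c_def by simp
  have clt: "real_of_int c < t * real \<mu> + 1" unfolding c_def by linarith
  have tmu: "2 * h * (t * real \<mu>) = 3 * pi / 2 - \<psi>"
  proof -
    have "2 * h * (t * real \<mu>) = 2 * (h * real \<mu>) * t" by (simp add: algebra_simps)
    also have "\<dots> = 2 * pi * t" using hmu by simp
    also have "\<dots> = 3 * pi / 2 - \<psi>" unfolding t_def using pi_gt_zero by (simp add: field_simps)
    finally show ?thesis .
  qed
  have alo: "a \<ge> 3 * pi / 2"
  proof -
    have "2 * h * real_of_int c \<ge> 2 * h * (t * real \<mu>)" using cge hpos by simp
    then show ?thesis unfolding a_def using tmu by linarith
  qed
  have ahi: "a < 3 * pi / 2 + 2 * h"
  proof -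
    have "2 * h * real_of_int c < 2 * h * (t * real \<mu> + 1)" using clt hpos by simp
    then show ?thesis unfolding a_def using tmu by (simp add: algebra_simps)
  qed
  have Re_eq: "\<And>k. (if 0 < Re (hcoef \<zeta> \<psi> \<mu> k) then Re (hcoef \<zeta> \<psi> \<mu> k) else 0)
      = sqrt \<zeta> * F (int k - 1)"
  proof -
    fix k
    have e: "\<psi> + 2 * pi * (real k - 1) / real \<mu> = \<psi> + 2 * h * real_of_int (int k - 1)"
      unfolding h_def by simp
    have sz: "sqrt \<zeta> > 0" using assms(4) by simp
    show "?thesis k" unfolding re_hcoef F_def e using sz
      by (auto simp: zero_less_mult_iff max_def)
  qed
  have S1: "(\<Sum>k\<in>K1 \<zeta> \<psi> \<mu> W. Re (hcoef \<zeta> \<psi> \<mu> k)) = sqrt \<zeta> * (\<Sum>k\<in>{2..\<mu>*W+1}. F (int k - 1))"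
  proof -
    have "(\<Sum>k\<in>K1 \<zeta> \<psi> \<mu> W. Re (hcoef \<zeta> \<psi> \<mu> k))
       = (\<Sum>k\<in>{2..\<mu>*W+1}. if 0 < Re (hcoef \<zeta> \<psi> \<mu> k) then Re (hcoef \<zeta> \<psi> \<mu> k) else 0)"
      unfolding K1_def by (rule sum.inter_filter) simp
    also have "\<dots> = (\<Sum>k\<in>{2..\<mu>*W+1}. sqrt \<zeta> * F (int k - 1))"
      by (rule sum.cong[OF refl], rule Re_eq)
    finally show ?thesis by (simp only: sum_distrib_left)
  qed
  have S2: "(\<Sum>k\<in>{2..\<mu>*W+1}. F (int k - 1)) = (\<Sum>i<\<mu>*W. F (1 + int i))"
  proof -
    have st: "{2..\<mu>*W+1} = (\<lambda>i. i + 2) ` {..<\<mu>*W}"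
    proof
      show "{2..\<mu>*W+1} \<subseteq> (\<lambda>i. i + 2) ` {..<\<mu>*W}"
      proof
        fix x assume "x \<in> {2..\<mu>*W+1}"
        then have "x = (x - 2) + 2" "x - 2 < \<mu>*W" by auto
        then show "x \<in> (\<lambda>i. i + 2) ` {..<\<mu>*W}" by blast
      qed
    qed auto
    have "(\<Sum>k\<in>{2..\<mu>*W+1}. F (int k - 1)) = (\<Sum>i<\<mu>*W. F (int (i + 2) - 1))"
      unfolding st by (subst sum.reindex) (auto simp: inj_on_def)
    also have "\<dots> = (\<Sum>i<\<mu>*W. F (1 + int i))" by (simp add: ac_simps)
    finally show ?thesis .
  qed
  have per: "\<And>m. F (m + int \<mu>) = F m"
  proof -
    fix m
    have "\<psi> + 2 * h * real_of_int (m + int \<mu>) = (\<psi> + 2 * h * real_of_int m) + 2 * pi"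
      using hmu by (simp add: algebra_simps)
    then show "F (m + int \<mu>) = F m" unfolding F_def by (simp only: cos_periodic)
  qed
  have S3: "(\<Sum>i<\<mu>*W. F (1 + int i)) = real W * (\<Sum>i<\<mu>. F (c + int i))"
    using periodic_W[of F \<mu>, OF per, of W] periodic_shift[of F \<mu>, OF per, of c] by simp
  have first: "\<And>i. i < n \<Longrightarrow> F (c + int i) = cos (a + 2 * h * real i)"
  proof -
    fix i assume i: "i < n"
    have e: "\<psi> + 2 * h * real_of_int (c + int i) = a + 2 * h * real i"
      unfolding a_def by (simp add: algebra_simps)
    have "real i \<le> real n - 1" using i by linarith
    then have "2 * h * real i \<le> 2 * h * (real n - 1)" using hpos by simp
    then have "2 * h * real i \<le> pi - 2 * h" using hn by (simp add: algebra_simps)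
    moreover have "2 * h * real i \<ge> 0" using hpos by simp
    ultimately have l1: "-(pi/2) \<le> (a + 2 * h * real i) - 2 * pi" and l2: "(a + 2 * h * real i) - 2 * pi \<le> pi/2"
      using alo ahi by linarith+
    have "0 \<le> cos ((a + 2 * h * real i) - 2 * pi)" by (rule cos_ge_zero[OF l1 l2])
    then have "0 \<le> cos (a + 2 * h * real i)" by (simp add: cos_diff)
    then show "F (c + int i) = cos (a + 2 * h * real i)" unfolding F_def e by simp
  qed
  have second: "\<And>i. i < n \<Longrightarrow> F (c + int (n + i)) = 0"
  proof -
    fix i assume i: "i < n"
    have e: "\<psi> + 2 * h * real_of_int (c + int (n + i)) - 3 * pi = (a + 2 * h * real i) - 2 * pi"
      unfolding a_def using hn by (simp add: algebra_simps)
    have "real i \<le> real n - 1" using i by linarith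
    then have "2 * h * real i \<le> 2 * h * (real n - 1)" using hpos by simp
    then have "2 * h * real i \<le> pi - 2 * h" using hn by (simp add: algebra_simps)
    moreover have "2 * h * real i \<ge> 0" using hpos by simp
    ultimately have l1: "-(pi/2) \<le> (a + 2 * h * real i) - 2 * pi" and l2: "(a + 2 * h * real i) - 2 * pi \<le> pi/2"
      using alo ahi by linarith+
    have "0 \<le> cos ((a + 2 * h * real i) - 2 * pi)" by (rule cos_ge_zero[OF l1 l2])
    then have "0 \<le> cos (\<psi> + 2 * h * real_of_int (c + int (n + i)) - 3 * pi)" using e by simp
    moreover have "cos (\<psi> + 2 * h * real_of_int (c + int (n + i)) - 3 * pi)
        = - cos (\<psi> + 2 * h * real_of_int (c + int (n + i)))"
      by (simp add: cos_diff)
    ultimately show "F (c + int (n + i)) = 0" unfolding F_def by simp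
  qed
  have S4: "(\<Sum>i<\<mu>. F (c + int i)) = (\<Sum>i<n. cos (a + 2 * h * real i))"
  proof -
    have "(\<Sum>i<\<mu>. F (c + int i)) = (\<Sum>i<n. F (c + int i)) + (\<Sum>i<n. F (c + int (n + i)))"
      unfolding mu by (rule sum_split_add)
    also have "(\<Sum>i<n. F (c + int (n + i))) = 0" using second by simp
    also have "(\<Sum>i<n. F (c + int i)) = (\<Sum>i<n. cos (a + 2 * h * real i))"
      using first by simp
    finally show ?thesis by simp
  qed
  have S5: "(\<Sum>i<n. cos (a + 2 * h * real i)) = - sin (a - h) / sin h"
  proof -
    have "(2 * real n - 1) * h = pi - h" using hn by (simp add: algebra_simps)
    then have "sin (a + (2 * real n - 1) * h) = - sin (a - h)"
      by (simp add: sin_add cos_diff sin_diff algebra_simps)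
    then have "2 * sin h * (\<Sum>i<n. cos (a + 2 * h * real i)) = - 2 * sin (a - h)"
      using cos_telescope[of h a n] by simp
    then have e: "sin h * (\<Sum>i<n. cos (a + 2 * h * real i)) = - sin (a - h)" by linarith
    have "(\<Sum>i<n. cos (a + 2 * h * real i)) = (sin h * (\<Sum>i<n. cos (a + 2 * h * real i))) / sin h"
      using sinh by simp
    then show ?thesis unfolding e .
  qed
  have alpha: "alphaI \<zeta> \<psi> \<mu> W = \<zeta> * (real W * sin (a - h) / sin h)\<^sup>2"
    unfolding alphaI_def S1 S2 S3 S4 S5 using assms(4) by (rule alg_A)
  have carg: "- 2 * pi * t - pi / real \<mu> + 2 * pi / real \<mu> * real_of_int c = (a - h) - 3 * pi / 2"
  proof -
    have "- 2 * pi * t = \<psi> - 3 * pi / 2" unfolding t_def using pi_gt_zero by (simp add: field_simps)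
    moreover have "2 * pi / real \<mu> * real_of_int c = 2 * h * real_of_int c" unfolding h_def by simp
    ultimately show ?thesis unfolding a_def h_def by simp
  qed
  have ccos: "cos ((a - h) - 3 * pi / 2) = - sin (a - h)"
  proof -
    have "(a - h) - 3 * pi / 2 = ((a - h) + pi / 2) - 2 * pi" by simp
    then have "cos ((a - h) - 3 * pi / 2) = cos ((a - h) + pi / 2)" by (simp only: cos_diff) simp
    also have "\<dots> = - sin (a - h)" by (simp add: cos_add)
    finally show ?thesis .
  qed
  have Wpos: "real W > 0" using assms(1) by simp
  have "alphaI \<zeta> \<psi> \<mu> W = \<zeta> * (cos (- 2 * pi * t - pi / real \<mu> + 2 * pi / real \<mu> * real_of_int c))\<^sup>2
               / (sin (pi / real \<mu>) / real W)\<^sup>2"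
    unfolding alpha carg ccos unfolding h_def[symmetric] using sinh Wpos by (rule alg_B)
  then show ?thesis using trange unfolding Let_def t_def[symmetric] c_def by simp
qed

end
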